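(* Let $G$ be a tight $(2P_2+P_1)$-free graph with $m=m(G)$, dense set $T=\{u_1,\dots,u_m\}$, and $S=\delta T$. Let $c$ be a b-colouring of $G$ with exactly $m$ colours and colour classes $V_1,\dots,V_m$, indexed so that $V_i\cap T=\{u_i\}$ for each $i$. For non-adjacent $u\in T$ and $s\in S$, let $T(u,s)$ be the set of neighbours of $s$ in $T$ that are not adjacent to $u$. If $|V_i|\geq 3$ for some $i$ and $s\in S\cap V_i$, then every vertex of $T(u_i,s)$ is adjacent to every vertex of $T\setminus(T(u_i,s)\cup\{u_i\})$.
   Context: A colouring of $G$ is a map $c:V(G)\to\mathbb{Z}^+$ with adjacent vertices receiving distinct colours. A vertex is b-chromatic under $c$ if it is adjacent to a vertex of every colour used by $c$ other than its own; a b-colouring is a colouring in which every colour class has a b-chromatic vertex. $m(G)$ is the largest $k$ such that $G$ has at least $k$ vertices of degree at least $k-1$; a vertex of degree at least $m(G)-1$ is dense; $G$ is tight if it has exactly $m(G)$ dense vertices, each of degree exactly $m(G)-1$. $\delta T=\left(\bigcup_{u\in T}N(u)\right)\setminus T$. (In any b-colouring of a tight graph with $m(G)$ colours, each colour class contains exactly one vertex of $T$, so the indexing above exists.) *)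

theory Defs
  imports Main
begin

definition graph :: "'a set \<Rightarrow> ('a \<Rightarrow> 'a \<Rightarrow> bool) \<Rightarrow> bool" where
  "graph V E \<longleftrightarrow> finite V \<and> (\<forall>x y. E x y \<longrightarrow> x \<in> V \<and> y \<in> V)
     \<and> (\<forall>x y. E x y \<longrightarrow> E y x) \<and> (\<forall>x. \<not> E x x)"

definition nbrs :: "'a set \<Rightarrow> ('a \<Rightarrow> 'a \<Rightarrow> bool) \<Rightarrow> 'a \<Rightarrow> 'a set" where
  "nbrs V E v = {u \<in> V. E v u}"

definition deg :: "'a set \<Rightarrow> ('a \<Rightarrow> 'a \<Rightarrow> bool) \<Rightarrow> 'a \<Rightarrow> nat" where
  "deg V E v = card (nbrs V E v)"

definition mG :: "'a set \<Rightarrow> ('a \<Rightarrow> 'a \<Rightarrow> bool) \<Rightarrow> nat" where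
  "mG V E = (GREATEST k. k \<le> card {v \<in> V. k - 1 \<le> deg V E v})"

definition dense_set :: "'a set \<Rightarrow> ('a \<Rightarrow> 'a \<Rightarrow> bool) \<Rightarrow> 'a set" where
  "dense_set V E = {v \<in> V. mG V E - 1 \<le> deg V E v}"

definition tight :: "'a set \<Rightarrow> ('a \<Rightarrow> 'a \<Rightarrow> bool) \<Rightarrow> bool" where
  "tight V E \<longleftrightarrow> card (dense_set V E) = mG V E
     \<and> (\<forall>v \<in> dense_set V E. deg V E v = mG V E - 1)"

definition delta :: "'a set \<Rightarrow> ('a \<Rightarrow> 'a \<Rightarrow> bool) \<Rightarrow> 'a set \<Rightarrow> 'a set" where
  "delta V E T = (\<Union>u \<in> T. nbrs V E u) - T"

definition two_P2_P1_free :: "'a set \<Rightarrow> ('a \<Rightarrow> 'a \<Rightarrow> bool) \<Rightarrow> bool" where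
  "two_P2_P1_free V E \<longleftrightarrow> \<not> (\<exists>a\<in>V. \<exists>b\<in>V. \<exists>x\<in>V. \<exists>y\<in>V. \<exists>z\<in>V.
     distinct [a, b, x, y, z] \<and> E a b \<and> E x y
     \<and> \<not> E a x \<and> \<not> E a y \<and> \<not> E b x \<and> \<not> E b y
     \<and> \<not> E z a \<and> \<not> E z b \<and> \<not> E z x \<and> \<not> E z y)"

definition colouring :: "'a set \<Rightarrow> ('a \<Rightarrow> 'a \<Rightarrow> bool) \<Rightarrow> ('a \<Rightarrow> nat) \<Rightarrow> bool" where
  "colouring V E c \<longleftrightarrow> (\<forall>v \<in> V. 0 < c v) \<and> (\<forall>x y. E x y \<longrightarrow> c x \<noteq> c y)"

definition b_chromatic :: "'a set \<Rightarrow> ('a \<Rightarrow> 'a \<Rightarrow> bool) \<Rightarrow> ('a \<Rightarrow> nat) \<Rightarrow> 'a \<Rightarrow> bool" where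
  "b_chromatic V E c v \<longleftrightarrow> (\<forall>k \<in> c ` V. k \<noteq> c v \<longrightarrow> (\<exists>w \<in> V. E v w \<and> c w = k))"

definition b_colouring :: "'a set \<Rightarrow> ('a \<Rightarrow> 'a \<Rightarrow> bool) \<Rightarrow> ('a \<Rightarrow> nat) \<Rightarrow> bool" where
  "b_colouring V E c \<longleftrightarrow> colouring V E c
     \<and> (\<forall>k \<in> c ` V. \<exists>v \<in> V. c v = k \<and> b_chromatic V E c v)"

definition Tus :: "'a set \<Rightarrow> ('a \<Rightarrow> 'a \<Rightarrow> bool) \<Rightarrow> 'a \<Rightarrow> 'a \<Rightarrow> 'a set" where
  "Tus V E u s = {t \<in> dense_set V E. E s t \<and> \<not> E u t}"

end

theory Submission
  imports Defs
begin

lemma bchrom_img: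
  assumes "b_chromatic V E c t"
  shows "c ` V - {c t} \<subseteq> c ` nbrs V E t"
proof
  fix k assume k: "k \<in> c ` V - {c t}"
  hence k1: "k \<in> c ` V" and k2: "k \<noteq> c t" by auto
  have "\<forall>k \<in> c ` V. k \<noteq> c t \<longrightarrow> (\<exists>w \<in> V. E t w \<and> c w = k)"
    using assms unfolding b_chromatic_def .
  then obtain w where "w \<in> V" "E t w" "c w = k" using k1 k2 by metis
  then show "k \<in> c ` nbrs V E t" unfolding nbrs_def by force
qed

theorem mainTheorem9:
  fixes V :: "'a set" and E :: "'a \<Rightarrow> 'a \<Rightarrow> bool" and c :: "'a \<Rightarrow> nat"
    and u :: "nat \<Rightarrow> 'a" and i :: nat and s :: 'a
  assumes "graph V E"
    and "tight V E"
    and "two_P2_P1_free V E"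
    and "b_colouring V E c"
    and "card (c ` V) = mG V E"
    and "bij_betw u {1..mG V E} (dense_set V E)"
    and "\<forall>j \<in> {1..mG V E}. {v \<in> V. c v = c (u j)} \<inter> dense_set V E = {u j}"
    and "i \<in> {1..mG V E}"
    and "card {v \<in> V. c v = c (u i)} \<ge> 3"
    and "s \<in> delta V E (dense_set V E)"
    and "c s = c (u i)"
  shows "\<forall>x \<in> Tus V E (u i) s. \<forall>y \<in> dense_set V E - (Tus V E (u i) s \<union> {u i}). E x y"
proof -
  define D where "D = dense_set V E"
  define m where "m = mG V E"
  have fin: "finite V" and EV: "\<And>x y. E x y \<Longrightarrow> x \<in> V \<and> y \<in> V"
    and sym: "\<And>x y. E x y \<Longrightarrow> E y x" and irr: "\<And>x. \<not> E x x"
    using assms(1) unfolding graph_def by blast+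
  have col: "\<And>a b. E a b \<Longrightarrow> c a \<noteq> c b"
    using assms(4) unfolding b_colouring_def colouring_def by auto
  have DV: "D \<subseteq> V" unfolding D_def dense_set_def by auto
  have cls: "\<And>t v. t \<in> D \<Longrightarrow> v \<in> D \<Longrightarrow> c v = c t \<Longrightarrow> v = t"
  proof -
    fix t v assume t: "t \<in> D" and v: "v \<in> D" and cv: "c v = c t"
    have "t \<in> u ` {1..m}" using assms(6) t unfolding D_def m_def bij_betw_def by simp
    then obtain j where j: "j \<in> {1..m}" "t = u j" by blast
    have "v \<in> {v \<in> V. c v = c (u j)} \<inter> D" using v cv j DV by auto
    then show "v = t" using assms(7) j unfolding D_def m_def by auto
  qed
  have finN: "\<And>t. finite (nbrs V E t)" using fin unfolding nbrs_def by auto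
  have bc: "\<And>t. t \<in> D \<Longrightarrow> b_chromatic V E c t"
  proof -
    fix t assume t: "t \<in> D"
    obtain v where v: "v \<in> V" "c v = c t" "b_chromatic V E c v"
      using assms(4) t DV unfolding b_colouring_def by blast
    have "c ` V - {c v} \<subseteq> c ` nbrs V E v"
      using v(3) by (rule bchrom_img)
    hence "card (c ` V - {c v}) \<le> card (c ` nbrs V E v)"
      by (intro card_mono finite_imageI finN)
    also have "\<dots> \<le> card (nbrs V E v)" by (rule card_image_le[OF finN])
    finally have "card (c ` V - {c v}) \<le> card (nbrs V E v)" .
    moreover have "card (c ` V - {c v}) = m - 1"
      using v(1) fin assms(5) unfolding m_def by (simp add: card_Diff_singleton)
    ultimately have "v \<in> D" using v(1) unfolding D_def dense_set_def deg_def m_def by auto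
    have "v = t" using cls[OF t \<open>v \<in> D\<close>] v(2) by blast
    then show "b_chromatic V E c t" using v(3) by simp
  qed
  have inj: "\<And>t a b. t \<in> D \<Longrightarrow> E t a \<Longrightarrow> E t b \<Longrightarrow> c a = c b \<Longrightarrow> a = b"
  proof -
    fix t a b assume t: "t \<in> D" and ab: "E t a" "E t b" "c a = c b"
    have tV: "t \<in> V" using t DV by auto
    have "c ` nbrs V E t = c ` V - {c t}"
    proof
      show "c ` nbrs V E t \<subseteq> c ` V - {c t}" unfolding nbrs_def using col by fastforce
      show "c ` V - {c t} \<subseteq> c ` nbrs V E t"
        using bc[OF t] by (rule bchrom_img)
    qed
    moreover have "card (c ` V - {c t}) = m - 1"
      using tV fin assms(5) unfolding m_def by (simp add: card_Diff_singleton)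
    moreover have "card (nbrs V E t) = m - 1"
      using assms(2) t unfolding tight_def deg_def D_def m_def by auto
    ultimately have "inj_on c (nbrs V E t)"
      by (simp add: eq_card_imp_inj_on finN)
    moreover have "a \<in> nbrs V E t" "b \<in> nbrs V E t" using ab EV unfolding nbrs_def by auto
    ultimately show "a = b" using ab(3) inj_on_def by metis
  qed
  have free: "\<And>a b x y z. a \<in> V \<Longrightarrow> b \<in> V \<Longrightarrow> x \<in> V \<Longrightarrow> y \<in> V \<Longrightarrow> z \<in> V \<Longrightarrow>
     distinct [a, b, x, y, z] \<Longrightarrow> E a b \<Longrightarrow> E x y
     \<Longrightarrow> \<not> E a x \<Longrightarrow> \<not> E a y \<Longrightarrow> \<not> E b x \<Longrightarrow> \<not> E b y
     \<Longrightarrow> \<not> E z a \<Longrightarrow> \<not> E z b \<Longrightarrow> \<not> E z x \<Longrightarrow> \<not> E z y \<Longrightarrow> False"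
    using assms(3) unfolding two_P2_P1_free_def by blast
  have uiD: "u i \<in> D" using assms(6,8) unfolding D_def bij_betw_def by auto
  have sV: "s \<in> V" and sD: "s \<notin> D"
    using assms(10) unfolding delta_def D_def nbrs_def by auto
  have uiV: "u i \<in> V" using uiD DV by auto
  obtain w where w: "w \<in> V" "c w = c (u i)" "w \<noteq> u i" "w \<noteq> s"
  proof -
    have "\<not> {v \<in> V. c v = c (u i)} \<subseteq> {u i, s}"
    proof
      assume "{v \<in> V. c v = c (u i)} \<subseteq> {u i, s}"
      hence "card {v \<in> V. c v = c (u i)} \<le> card {u i, s}" by (simp add: card_mono)
      also have "\<dots> \<le> 2" by (simp add: card_insert_le_m1)
      finally show False using assms(9) by simp
    qed
    then show ?thesis using that by blast
  qed
  show ?thesis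
  proof (intro ballI)
    fix x y assume x: "x \<in> Tus V E (u i) s"
      and y: "y \<in> dense_set V E - (Tus V E (u i) s \<union> {u i})"
    have xD: "x \<in> D" and sx: "E s x" and nux: "\<not> E (u i) x"
      using x unfolding Tus_def D_def by auto
    have yD: "y \<in> D" and yu: "y \<noteq> u i" and ynot: "\<not> (E s y \<and> \<not> E (u i) y)"
      using y unfolding Tus_def D_def by auto
    have xV: "x \<in> V" and yV: "y \<in> V" using xD yD DV by auto
    have xy: "x \<noteq> y" using x y by auto
    have xs: "E x s" using sym sx by metis
    have cxs: "c x \<noteq> c s" using col[OF xs] .
    show "E x y"
    proof (rule ccontr)
      assume nxy: "\<not> E x y"
      hence nyx: "\<not> E y x" using sym by metis
      have sui: "s \<noteq> u i" using sD uiD by auto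
      have xui: "x \<noteq> u i" using cxs assms(11) by auto
      show False
      proof (cases "E (u i) y")
        case True
        have yui: "E y (u i)" using sym True by metis
        have nys: "\<not> E y s" using inj[OF yD yui _] assms(11) sui by metis
        have nyw: "\<not> E y w" using inj[OF yD yui _] w by metis
        have nxw: "\<not> E x w" using inj[OF xD xs _] w assms(11) by metis
        have "\<not> E (u i) s" "\<not> E w (u i)" "\<not> E w s"
          using col assms(11) w by (metis col)+
        moreover have "\<not> E s y" "\<not> E w y" "\<not> E w x" "\<not> E (u i) x" using sym nys nyw nxw nux by metis+
        moreover have "distinct [u i, y, s, x, w]"
          using yu sui xui xy w cxs assms(11) col[OF True] nys sD yD by auto
        ultimately show False
          using free[of "u i" y s x w] uiV yV sV xV w(1) True sx nxy nyx nys by auto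
      next
        case False
        hence nsy: "\<not> E s y" using ynot by auto
        have cy: "c (u i) \<noteq> c y" using cls[OF yD uiD] yu by metis
        obtain v where v: "v \<in> V" "E y v" "c v = c (u i)"
          using bc[OF yD] uiV cy unfolding b_chromatic_def by fastforce
        have vs: "v \<noteq> s" using v nsy sym by metis
        have vui: "v \<noteq> u i" using v False sym by metis
        have nxv: "\<not> E x v" using inj[OF xD xs _] v vs assms(11) by metis
        have "\<not> E (u i) s" "\<not> E (u i) v" "\<not> E v s"
          using col assms(11) v by (metis col)+
        moreover have "\<not> E v x" "\<not> E y s" "\<not> E (u i) y" using sym nxv nsy False by metis+
        moreover have "distinct [y, v, s, x, u i]"
          using yu sui xui xy vs vui cxs v assms(11) sD yD irr by auto
        ultimately show False
          using free[of y v s x "u i"] uiV yV sV xV v sx nxy nyx nux by auto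
      qed
    qed
  qed
qed

end
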